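(* Consider, for $x\ge0$, the planar system $$\dot x=1,\qquad \dot y=-ay-\sin\!\left[\pi x\left(1+\tfrac12\lambda\right)\right],$$ with $\lambda=\operatorname{sign}(y)$ for $y\ne0$ and $\lambda\in(-1,1)$ on $y=0$. For all $a>0$ there exists $x_a\in(2,4)$ such that the system has a unique sliding $4$-periodic solution $y_d(x)$ which lies in $\overline S_-=\{y\le 0\}$ and satisfies $$y_d(x)<0 \text{ for } x\in(4n,4n+x_a),\qquad y_d(x)=0 \text{ for } x\in\{0\}\cup[4n+x_a,4(n+1)],\qquad n\in\mathbb{N}.$$
   Context: For $y>0$ the system is $\dot y=-ay-\sin(3\pi x/2)$ and for $y<0$ it is $\dot y=-ay-\sin(\pi x/2)$. The sliding manifold is $\Lambda^N=\{(x,0):x\in(\frac{2n}{3},2n),\ n\ge1\}$, the set of points on $y=0$ where some $\lambda\in(-1,1)$ gives $\sin[\pi x(1+\lambda/2)]=0$; a solution may remain on $y=0$ (with $\dot x=1$) over an interval only while on $\Lambda^N$. A periodic solution is sliding if part of it lies on $\Lambda^N$. *)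

theory Defs
  imports "HOL-Analysis.Analysis"
begin

text \<open>Abscissae of the sliding manifold Lambda^N = {(x,0) : x in (2n/3, 2n), n >= 1}.\<close>
definition sliding_set :: "real set" where
  "sliding_set = {x. \<exists>n::nat. n \<ge> 1 \<and> 2 * real n / 3 < x \<and> x < 2 * real n}"

definition sys_rhs :: "real \<Rightarrow> real \<Rightarrow> real \<Rightarrow> real \<Rightarrow> real" where
  "sys_rhs a lam x y = - a * y - sin (pi * x * (1 + lam / 2))"

definition admissible_lambda :: "real \<Rightarrow> real \<Rightarrow> bool" where
  "admissible_lambda y lam \<longleftrightarrow> (if y \<noteq> 0 then lam = sgn y else -1 < lam \<and> lam < 1)"

text \<open>A solution for x >= 0 (x is the time, since dx/dt = 1): continuous on [0,oo),
  satisfying the differential equation with an admissible lambda at every x > 0 outside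
  a countable exceptional set, and remaining on y = 0 over an interval only while on
  Lambda^N.\<close>
definition is_solution :: "real \<Rightarrow> (real \<Rightarrow> real) \<Rightarrow> bool" where
  "is_solution a y \<longleftrightarrow>
     continuous_on {0..} y \<and>
     (\<exists>S. countable S \<and>
        (\<forall>x. 0 < x \<and> x \<notin> S \<longrightarrow>
           (\<exists>lam. admissible_lambda (y x) lam \<and>
                  (y has_real_derivative sys_rhs a lam x (y x)) (at x)))) \<and>
     (\<forall>c d. 0 \<le> c \<and> c < d \<and> (\<forall>x\<in>{c<..<d}. y x = 0) \<longrightarrow> {c<..<d} \<subseteq> sliding_set)"

definition periodic4 :: "(real \<Rightarrow> real) \<Rightarrow> bool" where
  "periodic4 y \<longleftrightarrow> (\<forall>x\<ge>0. y (x + 4) = y x)"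

definition is_sliding :: "(real \<Rightarrow> real) \<Rightarrow> bool" where
  "is_sliding y \<longleftrightarrow>
     (\<exists>c d. 0 \<le> c \<and> c < d \<and> (\<forall>x\<in>{c<..<d}. y x = 0) \<and> {c<..<d} \<subseteq> sliding_set)"

definition in_closed_lower :: "(real \<Rightarrow> real) \<Rightarrow> bool" where
  "in_closed_lower y \<longleftrightarrow> (\<forall>x\<ge>0. y x \<le> 0)"

end

theory Submission
  imports Defs
begin


lemma last_zero:
  fixes f :: "real \<Rightarrow> real"
  assumes "continuous_on {u..s} f" "u \<le> s" "f u = 0"
  shows "\<exists>r\<in>{u..s}. f r = 0 \<and> (\<forall>t\<in>{r<..s}. f t \<noteq> 0)"
proof -
  let ?Z = "{t\<in>{u..s}. f t = 0}"
  have "closed ?Z" using continuous_closed_preimage_constant[OF assms(1)] by auto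
  moreover have "bounded ?Z" by (rule bounded_subset[of "{u..s}"]) auto
  ultimately have "compact ?Z" using compact_eq_bounded_closed by blast
  moreover have "?Z \<noteq> {}" using assms by auto
  ultimately obtain r where r: "r \<in> ?Z" "\<forall>t\<in>?Z. t \<le> r" using compact_attains_sup by blast
  have "\<forall>t\<in>{r<..s}. f t \<noteq> 0"
  proof
    fix t assume t: "t \<in> {r<..s}"
    show "f t \<noteq> 0"
    proof
      assume "f t = 0"
      hence "t \<in> ?Z" using t r(1) by auto
      thus False using r(2) t by force
    qed
  qed
  thus ?thesis using r(1) by blast
qed

lemma first_zero:
  fixes f :: "real \<Rightarrow> real"
  assumes "continuous_on {u..s} f" "u \<le> s" "f s = 0"
  shows "\<exists>q\<in>{u..s}. f q = 0 \<and> (\<forall>t\<in>{u..<q}. f t \<noteq> 0)"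
proof -
  let ?Z = "{t\<in>{u..s}. f t = 0}"
  have "closed ?Z" using continuous_closed_preimage_constant[OF assms(1)] by auto
  moreover have "bounded ?Z" by (rule bounded_subset[of "{u..s}"]) auto
  ultimately have "compact ?Z" using compact_eq_bounded_closed by blast
  moreover have "?Z \<noteq> {}" using assms by auto
  ultimately obtain r where r: "r \<in> ?Z" "\<forall>t\<in>?Z. r \<le> t" using compact_attains_inf by blast
  have "\<forall>t\<in>{u..<r}. f t \<noteq> 0"
  proof
    fix t assume t: "t \<in> {u..<r}"
    show "f t \<noteq> 0"
    proof
      assume "f t = 0"
      hence "t \<in> ?Z" using t r(1) by auto
      thus False using r(2) t by force
    qed
  qed
  thus ?thesis using r(1) by blast
qed

lemma ctbl_le:
  fixes w :: "real \<Rightarrow> real"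
  assumes cont: "continuous_on {r..q} w" and C: "countable C"
    and der: "\<And>t. t \<in> {r<..<q} \<Longrightarrow> t \<notin> C \<Longrightarrow> (w has_real_derivative 0) (at t)"
    and t1: "t1 \<in> {r..q}"
  shows "w t1 \<le> w r"
proof (rule ccontr)
  assume "\<not> w t1 \<le> w r"
  hence gt: "w t1 > w r" by simp
  hence rt: "r < t1" using t1 by (cases "r = t1") auto
  define \<delta> where "\<delta> = (w t1 - w r) / (2 * (t1 - r))"
  have dpos: "\<delta> > 0" using gt rt by (simp add: \<delta>_def)
  define v where "v t = w t - w r - \<delta> * (t - r)" for t
  have vr: "v r = 0" by (simp add: v_def)
  have vt1: "v t1 = (w t1 - w r) / 2" using rt by (simp add: v_def \<delta>_def field_simps)
  have vpos: "v t1 > 0" using vt1 gt by simp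
  have contv: "continuous_on {r..t1} v"
    unfolding v_def using t1
    by (intro continuous_intros continuous_on_subset[OF cont]) auto
  have "uncountable {0<..<v t1}" using vpos uncountable_open_interval by blast
  moreover have "countable (v ` C)" using C by simp
  ultimately obtain y where y: "y \<in> {0<..<v t1}" "y \<notin> v ` C"
    by (metis Diff_iff countable_subset subsetI)
  obtain x0 where x0: "r \<le> x0" "x0 \<le> t1" "v x0 = y"
    using IVT'[of v r y t1] y vr contv rt by auto
  let ?f = "\<lambda>t. v t - y"
  have "continuous_on {x0..t1} ?f"
    by (intro continuous_intros continuous_on_subset[OF contv]) (use x0 in auto)
  then obtain ts where ts: "ts \<in> {x0..t1}" "v ts = y" "\<forall>t\<in>{ts<..t1}. v t \<noteq> y"
    using last_zero[of x0 t1 ?f] x0 by auto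
  have above: "v t > y" if "t \<in> {ts<..t1}" for t
  proof (rule ccontr)
    assume "\<not> v t > y"
    moreover have "v t \<noteq> y" using ts(3) that by blast
    ultimately have "v t < y" by linarith
    moreover have "continuous_on {t..t1} v" using that ts x0
      by (intro continuous_on_subset[OF contv]) auto
    ultimately have "\<exists>x. t \<le> x \<and> x \<le> t1 \<and> v x = y"
    proof -
      have "t \<le> t1" using that by auto
      thus ?thesis using IVT'[of v t y t1] y \<open>v t < y\<close> \<open>continuous_on {t..t1} v\<close> that by auto
    qed
    then obtain x where "t \<le> x" "x \<le> t1" "v x = y" by blast
    thus False using ts that by auto
  qed
  have tsr: "ts \<noteq> r" using ts vr y by auto
  have tst1: "ts \<noteq> t1" using ts y by auto
  have tsC: "ts \<notin> C" using ts y by auto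
  have tsin: "ts \<in> {r<..<q}" using ts x0 tsr tst1 t1 by auto
  have "(v has_real_derivative 0 - \<delta> * 1) (at ts)"
    unfolding v_def using der[OF tsin tsC]
    by (intro derivative_eq_intros) auto
  hence dv: "(v has_real_derivative - \<delta>) (at ts)" by simp
  obtain d where d: "d > 0" "\<forall>h>0. h < d \<longrightarrow> v ts > v (ts + h)"
    using DERIV_neg_dec_right[OF dv] dpos by auto
  define h where "h = min (d/2) ((t1 - ts)/2)"
  have hpos: "h > 0" "h < d" using d ts tst1 by (auto simp: h_def)
  have "h \<le> (t1 - ts)/2" unfolding h_def by (rule min.cobounded2)
  hence "ts + h \<in> {ts<..t1}" using hpos ts tst1 by auto
  hence "v (ts + h) > y" by (rule above)
  moreover have "v ts > v (ts + h)" using d hpos by auto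
  ultimately show False using ts by auto
qed

lemma ctbl_const:
  fixes w :: "real \<Rightarrow> real"
  assumes cont: "continuous_on {r..q} w" and C: "countable C"
    and der: "\<And>t. t \<in> {r<..<q} \<Longrightarrow> t \<notin> C \<Longrightarrow> (w has_real_derivative 0) (at t)"
    and t1: "t1 \<in> {r..q}"
  shows "w t1 = w r"
proof -
  have "w t1 \<le> w r" by (rule ctbl_le[OF cont C der t1])
  moreover have "- w t1 \<le> - w r"
  proof (rule ctbl_le[OF _ C _ t1, of "\<lambda>t. - w t"])
    show "continuous_on {r..q} (\<lambda>t. - w t)" using cont by (intro continuous_intros)
    fix t assume "t \<in> {r<..<q}" "t \<notin> C"
    then show "((\<lambda>t. - w t) has_real_derivative 0) (at t)"
      using der DERIV_minus by fastforce
  qed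
  ultimately show ?thesis by simp
qed



definition Phi :: "real \<Rightarrow> real \<Rightarrow> real" where
  "Phi a t = exp (a*t) * (a * sin (pi*t/2) - pi/2 * cos (pi*t/2)) / (a^2 + pi^2/4)"

lemma Dpos: "a^2 + pi^2/4 > (0::real)"
  by (intro add_nonneg_pos) auto

lemma Phi_deriv: "(Phi a has_real_derivative exp (a*t) * sin (pi*t/2)) (at t)"
proof -
  have D: "a^2 + pi^2/4 \<noteq> 0" by (metis add_nonneg_pos pi_gt_zero zero_less_power zero_le_power2 less_irrefl divide_pos_pos zero_less_numeral)
  show ?thesis
    unfolding Phi_def [abs_def]
    apply (rule derivative_eq_intros refl | simp add: D)+
    using D apply (simp add: field_simps power2_eq_square)
    done
qed

lemma Phi_cont: "continuous_on S (Phi a)"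
  unfolding Phi_def using Dpos[of a] by (intro continuous_intros) auto

lemma Phi_inc:
  assumes "0 \<le> u" "u < v" "v \<le> 2"
  shows "Phi a u < Phi a v"
proof (rule DERIV_pos_imp_increasing_open[OF assms(2) _ Phi_cont])
  fix x assume "u < x" "x < v"
  hence "0 < pi*x/2" "pi*x/2 < pi" using assms by auto
  hence "sin (pi*x/2) > 0" by (rule sin_gt_zero)
  thus "\<exists>y. DERIV (Phi a) x :> y \<and> 0 < y" using Phi_deriv
    by (intro exI[of _ "exp (a*x) * sin (pi*x/2)"]) auto
qed

lemma Phi_dec:
  assumes "2 \<le> u" "u < v" "v \<le> 4"
  shows "Phi a u > Phi a v"
proof (rule DERIV_neg_imp_decreasing_open[OF assms(2) _ Phi_cont])
  fix x assume "u < x" "x < v"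
  hence "pi < pi*x/2" "pi*x/2 < 2*pi" using assms by auto
  hence "sin (pi*x/2) < 0" by (rule sin_lt_zero)
  thus "\<exists>y. DERIV (Phi a) x :> y \<and> y < 0" using Phi_deriv
    by (intro exI[of _ "exp (a*x) * sin (pi*x/2)"]) (auto simp: mult_pos_neg)
qed

lemma Phi_vals:
  "Phi a 0 = - (pi/2) / (a^2 + pi^2/4)"
  "Phi a 2 = exp (2*a) * (pi/2) / (a^2 + pi^2/4)"
  "Phi a 4 = - exp (4*a) * (pi/2) / (a^2 + pi^2/4)"
proof -
  have "pi * 4 / 2 = 2 * pi" by simp
  show "Phi a 0 = - (pi/2) / (a^2 + pi^2/4)" by (simp add: Phi_def)
  show "Phi a 2 = exp (2*a) * (pi/2) / (a^2 + pi^2/4)" by (simp add: Phi_def mult.commute)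
  have "pi * 4 / 2 = 2 * pi" by simp
  then show "Phi a 4 = - exp (4*a) * (pi/2) / (a^2 + pi^2/4)"
    by (simp add: Phi_def mult.commute)
qed

lemma Phi_4_lt_0:
  assumes "a > 0" shows "Phi a 4 < Phi a 0"
proof -
  have D: "a^2 + pi^2/4 > 0" by (simp add: add_nonneg_pos)
  have "exp (4*a) > 1" using assms by simp
  hence "exp (4*a) * (pi/2) > 1 * (pi/2)" by (intro mult_strict_right_mono) auto
  thus ?thesis using D by (simp add: Phi_vals divide_strict_right_mono)
qed

lemma Phi_0_lt_2: "Phi a 0 < Phi a 2"
  by (rule Phi_inc) auto

lemma Phi_gt_4:
  assumes "a > 0" "0 \<le> r" "r < 4" shows "Phi a r > Phi a 4"
proof (cases "r \<le> 2")
  case True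
  have "Phi a 0 \<le> Phi a r" using Phi_inc[of 0 r a] assms True by (cases "r = 0") auto
  thus ?thesis using Phi_4_lt_0[OF assms(1)] by simp
next
  case False thus ?thesis using Phi_dec[of r 4 a] assms by simp
qed

lemma xa_exists:
  assumes "a > 0"
  shows "\<exists>xa. 2 < xa \<and> xa < 4 \<and> Phi a xa = Phi a 0 \<and>
     (\<forall>t. 0 < t \<and> t < xa \<longrightarrow> Phi a t > Phi a 0) \<and>
     (\<forall>t. xa < t \<and> t \<le> 4 \<longrightarrow> Phi a t < Phi a 0)"
proof -
  obtain xa where xa: "2 \<le> xa" "xa \<le> 4" "Phi a xa = Phi a 0"
    using IVT2'[of "Phi a" 4 "Phi a 0" 2] Phi_4_lt_0[OF assms] Phi_0_lt_2[of a] Phi_cont by force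
  have x2: "xa \<noteq> 2" using xa Phi_0_lt_2[of a] by auto
  have x4: "xa \<noteq> 4" using xa Phi_4_lt_0[OF assms] by auto
  have A: "Phi a t > Phi a 0" if "0 < t" "t < xa" for t
  proof (cases "t \<le> 2")
    case True thus ?thesis using Phi_inc[of 0 t a] that by auto
  next
    case False thus ?thesis using Phi_dec[of t xa a] that xa by auto
  qed
  have B: "Phi a t < Phi a 0" if "xa < t" "t \<le> 4" for t
    using Phi_dec[of xa t a] that xa by auto
  show ?thesis using xa x2 x4 A B by (intro exI[of _ xa]) auto
qed



lemma floor_in:
  fixes k :: int
  assumes "4 * of_int k \<le> y" "y < 4 * of_int k + 4"
  shows "\<lfloor>y/4\<rfloor> = k"
  using assms by (intro floor_unique) auto

lemma per_ext_eq:
  fixes k :: int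
  assumes "h 0 = h 4" "4 * of_int k \<le> y" "y \<le> 4 * of_int k + 4"
  shows "h (y - 4 * of_int \<lfloor>y/4\<rfloor>) = h (y - 4 * of_int k)"
proof (cases "y = 4 * of_int k + 4")
  case True
  have "\<lfloor>y/4\<rfloor> = k + 1" using True by (intro floor_in) auto
  thus ?thesis using True assms(1) by simp
next
  case False thus ?thesis using floor_in[of k y] assms by simp
qed

lemma per_ext_cont:
  fixes h :: "real \<Rightarrow> real"
  assumes cont: "continuous_on {0..4} h" and h04: "h 0 = h 4"
  shows "continuous_on UNIV (\<lambda>y. h (y - 4 * of_int \<lfloor>y/4\<rfloor>))"
proof -
  let ?G = "\<lambda>y. h (y - 4 * of_int \<lfloor>y/4\<rfloor>)"
  have seg: "continuous_on {4 * of_int k..4 * of_int k + 4} ?G" for k :: int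
  proof -
    have "continuous_on {4 * of_int k..4 * of_int k + 4} (\<lambda>y. h (y - 4 * of_int k))"
      by (intro continuous_on_compose2[OF cont] continuous_intros) auto
    thus ?thesis
      by (rule continuous_on_eq) (use per_ext_eq[OF h04] in auto)
  qed
  have "isCont ?G x" for x
  proof -
    define k where "k = \<lfloor>x/4\<rfloor>"
    have k1: "of_int k \<le> x/4" "x/4 < of_int k + 1" unfolding k_def by (rule of_int_floor_le, rule real_of_int_floor_add_one_gt)
    have "continuous_on ({4 * of_int (k - 1)..4 * of_int (k - 1) + 4} \<union> {4 * of_int k..4 * of_int k + 4}) ?G"
      by (intro continuous_on_closed_Un seg) auto
    moreover have "{4 * of_int k - 4<..<4 * of_int k + 4} \<subseteq> {4 * of_int (k - 1)..4 * of_int (k - 1) + 4} \<union> {4 * of_int k..4 * of_int k + (4::real)}"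
    proof
      fix y :: real assume y: "y \<in> {4 * of_int k - 4<..<4 * of_int k + 4}"
      have e: "4 * real_of_int (k - 1) = 4 * of_int k - 4" by simp
      show "y \<in> {4 * of_int (k - 1)..4 * of_int (k - 1) + 4} \<union> {4 * of_int k..4 * of_int k + (4::real)}"
        unfolding e using y by (cases "y \<le> 4 * of_int k") auto
    qed
    ultimately have c: "continuous_on {4 * of_int k - 4<..<4 * of_int k + 4} ?G"
      by (rule continuous_on_subset)
    have "4 * of_int k \<le> x" "x < 4 * of_int k + 4" using k1 by linarith+
    hence xin: "x \<in> {4 * of_int k - 4<..<4 * of_int k + 4}" by auto
    have op: "open {4 * of_int k - 4<..<4 * of_int k + (4::real)}" by simp
    show ?thesis using continuous_on_eq_continuous_at[OF op, of ?G] c xin by simp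
  qed
  thus ?thesis by (simp add: continuous_at_imp_continuous_on)
qed

lemma sliding_gt: "x > 2/3 \<Longrightarrow> x \<in> sliding_set"
proof -
  assume x: "x > 2/3"
  show ?thesis
  proof (cases "x \<le> 1")
    case True thus ?thesis using x unfolding sliding_set_def by (intro CollectI exI[of _ 1]) auto
  next
    case False
    define n where "n = nat \<lfloor>x/2\<rfloor> + 1"
    have "real n = of_int \<lfloor>x/2\<rfloor> + 1" using False by (simp add: n_def)
    moreover have "2 * of_int \<lfloor>x/2\<rfloor> \<le> x" "x < 2 * of_int \<lfloor>x/2\<rfloor> + 2" by linarith+
    ultimately have "2 * real n / 3 < x" "x < 2 * real n" "n \<ge> 1" using False by (auto simp: n_def)
    thus ?thesis unfolding sliding_set_def by blast
  qed
qed

lemma sliding_le: "x \<in> sliding_set \<Longrightarrow> x > 2/3"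
proof -
  assume "x \<in> sliding_set"
  then obtain n :: nat where "n \<ge> 1" "2 * real n / 3 < x" unfolding sliding_set_def by auto
  moreover have "2 * real n / 3 \<ge> 2/3" using \<open>n \<ge> 1\<close> by auto
  ultimately show ?thesis by linarith
qed

lemma periodic_iter:
  assumes "periodic4 z" "x \<ge> 0"
  shows "z (x + 4 * real k) = z x"
proof (induction k)
  case 0 thus ?case by simp
next
  case (Suc k)
  have "z (x + 4 * real (Suc k)) = z ((x + 4 * real k) + 4)" by (simp add: algebra_simps)
  also have "\<dots> = z (x + 4 * real k)" using assms unfolding periodic4_def by auto
  finally show ?case using Suc by simp
qed

lemma periodic_reduce:
  assumes "periodic4 z" "x \<ge> 0"
  shows "z x = z (x - 4 * of_int \<lfloor>x/4\<rfloor>)" and "0 \<le> x - 4 * of_int \<lfloor>x/4\<rfloor>" and "x - 4 * of_int \<lfloor>x/4\<rfloor> < 4"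
proof -
  define k where "k = nat \<lfloor>x/4\<rfloor>"
  have k: "of_int \<lfloor>x/4\<rfloor> = real k" using assms by (simp add: k_def)
  have le: "4 * of_int \<lfloor>x/4\<rfloor> \<le> x" "x < 4 * of_int \<lfloor>x/4\<rfloor> + 4" by linarith+
  show "0 \<le> x - 4 * of_int \<lfloor>x/4\<rfloor>" "x - 4 * of_int \<lfloor>x/4\<rfloor> < 4" using le by auto
  have "z ((x - 4 * real k) + 4 * real k) = z (x - 4 * real k)"
    by (rule periodic_iter[OF assms(1)]) (use le k in auto)
  thus "z x = z (x - 4 * of_int \<lfloor>x/4\<rfloor>)" using k by simp
qed



lemma arc:
  assumes sol: "is_solution a z" and r: "0 \<le> r" "r < q" "z r = 0"
    and neg: "\<forall>t\<in>{r<..<q}. z t < 0"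
  shows "\<forall>t\<in>{r..q}. z t = - exp (-a*t) * (Phi a t - Phi a r)"
proof -
  from sol obtain S where cont: "continuous_on {0..} z" and S: "countable S"
    and der: "\<And>x. 0 < x \<Longrightarrow> x \<notin> S \<Longrightarrow> \<exists>lam. admissible_lambda (z x) lam \<and>
                  (z has_real_derivative sys_rhs a lam x (z x)) (at x)"
    unfolding is_solution_def by blast
  define w where "w t = exp (a*t) * z t + Phi a t" for t
  have cw: "continuous_on {r..q} w" unfolding w_def
    by (intro continuous_intros Phi_cont continuous_on_subset[OF cont]) (use r in auto)
  have dw: "(w has_real_derivative 0) (at t)" if t: "t \<in> {r<..<q}" "t \<notin> S" for t
  proof -
    have zt: "z t < 0" using neg t by auto
    obtain lam where lam: "admissible_lambda (z t) lam"
       "(z has_real_derivative sys_rhs a lam t (z t)) (at t)"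
      using der[of t] t r by auto
    have "lam = -1" using lam(1) zt unfolding admissible_lambda_def by auto
    hence dz: "(z has_real_derivative - a * z t - sin (pi * t / 2)) (at t)"
      using lam(2) by (simp add: sys_rhs_def)
    have e1: "((\<lambda>t. exp (a*t)) has_real_derivative exp (a*t) * a) (at t)"
      using DERIV_exp[THEN DERIV_chain2, OF DERIV_cmult_Id[of a t]] by (simp add: mult.commute)
    have "(w has_real_derivative
        exp (a*t) * (- a * z t - sin (pi * t / 2)) + exp (a*t) * a * z t + exp (a*t) * sin (pi*t/2)) (at t)"
      unfolding w_def [abs_def]
      by (intro DERIV_add DERIV_mult' e1 dz Phi_deriv)
    thus ?thesis by (simp add: algebra_simps)
  qed
  show ?thesis
  proof
    fix t assume t: "t \<in> {r..q}"
    have "w t = w r" by (rule ctbl_const[OF cw S dw t]) auto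
    hence "exp (a*t) * z t = Phi a r - Phi a t" using r by (simp add: w_def)
    hence "z t = exp (-a*t) * (Phi a r - Phi a t)"
      by (simp add: exp_minus field_simps)
    thus "z t = - exp (-a*t) * (Phi a t - Phi a r)" by (simp add: algebra_simps)
  qed
qed



lemma F_deriv:
  fixes k :: int and a x :: real
  shows "((\<lambda>y. - exp (-a*(y - 4* of_int k)) * (Phi a (y - 4* of_int k) - Phi a 0)) has_real_derivative
     (- a * (- exp (-a*(x - 4* of_int k)) * (Phi a (x - 4* of_int k) - Phi a 0)) - sin (pi * x / 2))) (at x)"
proof -
  define c where "c = 4 * (of_int k :: real)"
  have d1: "((\<lambda>y. y - c) has_real_derivative 1) (at x)"
    by (auto intro!: derivative_eq_intros)
  have dp: "((\<lambda>y. Phi a (y - c)) has_real_derivative exp (a*(x-c)) * sin (pi*(x-c)/2) * 1) (at x)"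
    using DERIV_chain2[OF Phi_deriv d1] .
  have dlin: "((\<lambda>y. -a*(y-c)) has_real_derivative -a * 1) (at x)"
    using DERIV_cmult[OF d1, of "-a"] .
  have de: "((\<lambda>y. exp (-a*(y-c))) has_real_derivative exp (-a*(x-c)) * (-a * 1)) (at x)"
    using DERIV_chain2[OF DERIV_exp dlin] .
  have dme: "((\<lambda>y. - exp (-a*(y-c))) has_real_derivative - (exp (-a*(x-c)) * (-a * 1))) (at x)"
    using DERIV_minus[OF de] .
  have dpp: "((\<lambda>y. Phi a (y - c) - Phi a 0) has_real_derivative exp (a*(x-c)) * sin (pi*(x-c)/2) * 1 - 0) (at x)"
    using DERIV_diff[OF dp DERIV_const] .
  have D: "((\<lambda>y. - exp (-a*(y-c)) * (Phi a (y - c) - Phi a 0)) has_real_derivative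
      - exp (-a*(x-c)) * (exp (a*(x-c)) * sin (pi*(x-c)/2) * 1 - 0) + - (exp (-a*(x-c)) * (-a * 1)) * (Phi a (x - c) - Phi a 0)) (at x)"
    using DERIV_mult'[OF dme dpp] .
  have ee: "exp (-a*(x-c)) * exp (a*(x-c)) = 1"
    by (simp add: exp_minus)
  have "pi*(x-c)/2 = pi*x/2 - (2*pi) * of_int k" by (simp add: c_def field_simps)
  hence "sin (pi*(x-c)/2) = sin (pi*x/2 - (2*pi) * of_int k)" by (rule arg_cong)
  also have "\<dots> = sin (pi*x/2)" by (simp only: sin_diff cos_int_2pin sin_int_2pin mult_1_right mult_zero_right diff_zero)
  finally have ss: "sin (pi*(x-c)/2) = sin (pi*x/2)" .
  have "- exp (-a*(x-c)) * (exp (a*(x-c)) * sin (pi*(x-c)/2) * 1 - 0) + - (exp (-a*(x-c)) * (-a * 1)) * (Phi a (x - c) - Phi a 0)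
     = - (exp (-a*(x-c)) * exp (a*(x-c))) * sin (pi*(x-c)/2) + a * exp (-a*(x-c)) * (Phi a (x - c) - Phi a 0)"
    by (simp add: algebra_simps)
  also have "\<dots> = - a * (- exp (-a*(x - c)) * (Phi a (x - c) - Phi a 0)) - sin (pi * x / 2)"
    unfolding ee ss by (simp add: algebra_simps)
  finally have eq: "- exp (-a*(x-c)) * (exp (a*(x-c)) * sin (pi*(x-c)/2) * 1 - 0) + - (exp (-a*(x-c)) * (-a * 1)) * (Phi a (x - c) - Phi a 0)
     = - a * (- exp (-a*(x - c)) * (Phi a (x - c) - Phi a 0)) - sin (pi * x / 2)" .
  show ?thesis using DERIV_cong[OF D eq] unfolding c_def .
qed



definition hf :: "real \<Rightarrow> real \<Rightarrow> real \<Rightarrow> real" where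
  "hf a xa t = (if t \<le> xa then - exp (-a*t) * (Phi a t - Phi a 0) else 0)"

definition ydf :: "real \<Rightarrow> real \<Rightarrow> real \<Rightarrow> real" where
  "ydf a xa y = hf a xa (y - 4 * of_int \<lfloor>y/4\<rfloor>)"

definition XA :: "real \<Rightarrow> real \<Rightarrow> bool" where
  "XA a xa \<longleftrightarrow> a > 0 \<and> 2 < xa \<and> xa < 4 \<and> Phi a xa = Phi a 0 \<and>
     (\<forall>t. 0 < t \<and> t < xa \<longrightarrow> Phi a t > Phi a 0) \<and>
     (\<forall>t. xa < t \<and> t \<le> 4 \<longrightarrow> Phi a t < Phi a 0)"

lemma red_bounds: "0 \<le> y - 4 * of_int \<lfloor>y/4\<rfloor>" "y - 4 * of_int \<lfloor>y/4\<rfloor> < (4::real)"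
proof -
  have "of_int \<lfloor>y/4\<rfloor> \<le> y/4" "y/4 < of_int \<lfloor>y/4\<rfloor> + 1"
    by (rule of_int_floor_le, rule real_of_int_floor_add_one_gt)
  thus "0 \<le> y - 4 * of_int \<lfloor>y/4\<rfloor>" "y - 4 * of_int \<lfloor>y/4\<rfloor> < (4::real)" by linarith+
qed

context
  fixes a xa :: real
  assumes X: "XA a xa"
begin

lemma X_a: "a > 0" and X_2: "2 < xa" and X_4: "xa < 4" and X_eq: "Phi a xa = Phi a 0"
  and X_gt: "\<And>t. 0 < t \<Longrightarrow> t < xa \<Longrightarrow> Phi a t > Phi a 0"
  and X_lt: "\<And>t. xa < t \<Longrightarrow> t \<le> 4 \<Longrightarrow> Phi a t < Phi a 0"
  using X unfolding XA_def by auto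

lemma hf0: "hf a xa 0 = 0" using X_2 by (simp add: hf_def)
lemma hf4: "hf a xa 4 = 0" using X_4 by (simp add: hf_def)
lemma hf_neg: "0 < t \<Longrightarrow> t < xa \<Longrightarrow> hf a xa t < 0"
  using X_gt[of t] by (simp add: hf_def)
lemma hf_zero: "xa \<le> t \<Longrightarrow> hf a xa t = 0"
  using X_eq by (cases "t = xa") (auto simp: hf_def)
lemma hf_le: "0 \<le> t \<Longrightarrow> hf a xa t \<le> 0"
proof -
  assume t: "0 \<le> t"
  show ?thesis
  proof (cases "t < xa")
    case True
    show ?thesis
    proof (cases "t = 0")
      case True thus ?thesis using hf0 by simp
    next
      case False thus ?thesis using hf_neg[of t] t \<open>t < xa\<close> by simp
    qed
  next
    case False thus ?thesis using hf_zero by simp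
  qed
qed

lemma hf_cont: "continuous_on {0..4} (hf a xa)"
proof -
  have c1: "continuous_on {0..xa} (hf a xa)"
  proof (rule continuous_on_eq)
    show "continuous_on {0..xa} (\<lambda>t. - exp (-a*t) * (Phi a t - Phi a 0))"
      by (intro continuous_intros Phi_cont)
  qed (auto simp: hf_def)
  have c2: "continuous_on {xa..4} (hf a xa)"
    by (rule continuous_on_eq[of _ "\<lambda>_. 0"]) (auto simp: hf_zero)
  have "continuous_on ({0..xa} \<union> {xa..4}) (hf a xa)"
    by (rule continuous_on_closed_Un[OF _ _ c1 c2]) auto
  moreover have "{0..xa} \<union> {xa..4} = {0..(4::real)}" using X_2 X_4 by auto
  ultimately show ?thesis by simp
qed

lemma yd_seg:
  fixes k :: int
  assumes "4 * of_int k \<le> y" "y \<le> 4 * of_int k + 4"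
  shows "ydf a xa y = hf a xa (y - 4 * of_int k)"
  unfolding ydf_def using per_ext_eq[of "hf a xa", OF _ assms] hf0 hf4 by simp

lemma yd_cont: "continuous_on UNIV (ydf a xa)"
  unfolding ydf_def [abs_def] using per_ext_cont[OF hf_cont] hf0 hf4 by simp

lemma yd_per: "ydf a xa (y + 4) = ydf a xa y"
proof -
  have "\<lfloor>(y+4)/4\<rfloor> = \<lfloor>y/4\<rfloor> + 1"
  proof -
    have "(y+4)/4 = y/4 + of_int 1" by simp
    thus ?thesis by (simp only: floor_add_int)
  qed
  thus ?thesis unfolding ydf_def by (simp add: algebra_simps)
qed

lemma yd_nat_neg:
  assumes "4 * real n < x" "x < 4 * real n + xa"
  shows "ydf a xa x < 0"
proof -
  have "ydf a xa x = hf a xa (x - 4 * of_int (int n))"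
    by (rule yd_seg) (use assms X_4 in auto)
  thus ?thesis using hf_neg[of "x - 4 * real n"] assms by simp
qed

lemma yd_nat_zero:
  assumes "4 * real n + xa \<le> x" "x \<le> 4 * (real n + 1)"
  shows "ydf a xa x = 0"
proof -
  have "ydf a xa x = hf a xa (x - 4 * of_int (int n))"
    by (rule yd_seg) (use assms X_2 in auto)
  thus ?thesis using hf_zero[of "x - 4 * real n"] assms by simp
qed

lemma yd0: "ydf a xa 0 = 0" using hf0 by (simp add: ydf_def)

lemma yd_le: "ydf a xa x \<le> 0"
  unfolding ydf_def using hf_le red_bounds by simp

end



context
  fixes a xa :: real
  assumes X: "XA a xa"
begin

lemma yd_solution: "is_solution a (ydf a xa)"
  unfolding is_solution_def
proof (intro conjI)
  show "continuous_on {0..} (ydf a xa)"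
    using continuous_on_subset[OF yd_cont[OF X]] by blast
next
  define S where "S = range (\<lambda>k::int. 4 * (of_int k :: real)) \<union> range (\<lambda>k::int. 4 * of_int k + xa)"
  have cS: "countable S" unfolding S_def by simp
  have "\<forall>x. 0 < x \<and> x \<notin> S \<longrightarrow> (\<exists>lam. admissible_lambda (ydf a xa x) lam \<and>
           (ydf a xa has_real_derivative sys_rhs a lam x (ydf a xa x)) (at x))"
  proof (intro allI impI)
    fix x assume x: "0 < x \<and> x \<notin> S"
    define k where "k = \<lfloor>x/4\<rfloor>"
    define u where "u = x - 4 * of_int k"
    have ub: "0 \<le> u" "u < 4" unfolding u_def k_def using red_bounds by auto
    have u0: "u \<noteq> 0" using x unfolding u_def S_def by auto
    have uxa: "u \<noteq> xa" using x unfolding u_def S_def by force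
    show "\<exists>lam. admissible_lambda (ydf a xa x) lam \<and>
           (ydf a xa has_real_derivative sys_rhs a lam x (ydf a xa x)) (at x)"
    proof (cases "u < xa")
      case True
      let ?F = "\<lambda>y. - exp (-a*(y - 4 * of_int k)) * (Phi a (y - 4 * of_int k) - Phi a 0)"
      have eqF: "ydf a xa y = ?F y" if "y \<in> {4 * of_int k<..<4 * of_int k + xa}" for y
      proof -
        have "ydf a xa y = hf a xa (y - 4 * of_int k)"
          by (rule yd_seg[OF X]) (use that X_4[OF X] in auto)
        thus ?thesis using that by (simp add: hf_def)
      qed
      have xin: "x \<in> {4 * of_int k<..<4 * of_int k + xa}" using ub u0 True unfolding u_def by auto
      have neg: "ydf a xa x < 0"
        using eqF[OF xin] hf_neg[OF X, of u] ub u0 True unfolding u_def hf_def by (simp add: u_def)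
      have "(?F has_real_derivative (- a * ?F x - sin (pi * x / 2))) (at x)"
        by (rule F_deriv)
      hence "(ydf a xa has_real_derivative (- a * ?F x - sin (pi * x / 2))) (at x)"
        by (rule has_field_derivative_transform_within_open[OF _ _ xin]) (auto simp: eqF)
      hence "(ydf a xa has_real_derivative sys_rhs a (-1) x (ydf a xa x)) (at x)"
        using eqF[OF xin] by (simp add: sys_rhs_def)
      moreover have "admissible_lambda (ydf a xa x) (-1)"
        using neg by (simp add: admissible_lambda_def)
      ultimately show ?thesis by blast
    next
      case False
      hence uxa': "xa < u" using uxa by auto
      have eq0: "ydf a xa y = 0" if "y \<in> {4 * of_int k + xa<..<4 * of_int k + 4}" for y
      proof -
        have "ydf a xa y = hf a xa (y - 4 * of_int k)"
          by (rule yd_seg[OF X]) (use that X_2[OF X] in auto)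
        thus ?thesis using that hf_zero[OF X, of "y - 4 * of_int k"] by simp
      qed
      have xin: "x \<in> {4 * of_int k + xa<..<4 * of_int k + 4}" using ub uxa' unfolding u_def by auto
      have k0: "k \<ge> 0" unfolding k_def using x by simp
      have x2: "x > 2" using uxa' X_2[OF X] k0 unfolding u_def by linarith
      have "((\<lambda>_. 0) has_real_derivative 0) (at x)" by simp
      hence d0: "(ydf a xa has_real_derivative 0) (at x)"
        by (rule has_field_derivative_transform_within_open[OF _ _ xin]) (auto simp: eq0)
      define n where "n = \<lfloor>x\<rfloor> + 1"
      have n1: "x < of_int n" "of_int n \<le> x + 1" unfolding n_def by linarith+
      define lam where "lam = 2 * of_int n / x - 2"
      have "of_int n / x > 1" using n1 x by simp
      moreover have "of_int n / x < 3/2" using n1 x2 by (simp add: divide_less_eq)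
      moreover have "2 * of_int n / x = 2 * (of_int n / x)" by simp
      ultimately have lam: "-1 < lam" "lam < 1" unfolding lam_def by linarith+
      have e: "pi * x * (1 + lam / 2) = pi * of_int n" unfolding lam_def using x by (simp add: field_simps)
      have "sys_rhs a lam x 0 = 0" unfolding sys_rhs_def e by simp
      moreover have "ydf a xa x = 0" using eq0[OF xin] .
      ultimately show ?thesis using d0 lam
        by (intro exI[of _ lam]) (simp add: admissible_lambda_def)
    qed
  qed
  thus "\<exists>S. countable S \<and> (\<forall>x. 0 < x \<and> x \<notin> S \<longrightarrow> (\<exists>lam. admissible_lambda (ydf a xa x) lam \<and>
           (ydf a xa has_real_derivative sys_rhs a lam x (ydf a xa x)) (at x)))"
    using cS by blast
next
  show "\<forall>c d. 0 \<le> c \<and> c < d \<and> (\<forall>x\<in>{c<..<d}. ydf a xa x = 0) \<longrightarrow> {c<..<d} \<subseteq> sliding_set"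
  proof (intro allI impI)
    fix c d assume cd: "0 \<le> c \<and> c < d \<and> (\<forall>x\<in>{c<..<d}. ydf a xa x = 0)"
    have "c \<ge> 2/3"
    proof (rule ccontr)
      assume "\<not> c \<ge> 2/3"
      define p where "p = (c + min d (2/3)) / 2"
      have p: "c < p" "p < d" "p < 2/3" using cd \<open>\<not> c \<ge> 2/3\<close> by (auto simp: p_def)
      have "ydf a xa p < 0"
        using yd_nat_neg[OF X, of 0 p] p cd X_2[OF X] by simp
      thus False using cd p by auto
    qed
    thus "{c<..<d} \<subseteq> sliding_set" using sliding_gt by auto
  qed
qed

lemma yd_sliding: "is_sliding (ydf a xa)"
  unfolding is_sliding_def
proof (rule exI[of _ xa], rule exI[of _ "4::real"], intro conjI)
  show "0 \<le> xa" "xa < 4" using X_2[OF X] X_4[OF X] by auto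
  show "\<forall>x\<in>{xa<..<4}. ydf a xa x = 0" using yd_nat_zero[OF X, of 0] by auto
  show "{xa<..<4} \<subseteq> sliding_set" using X_2[OF X] sliding_gt by auto
qed

lemma yd_periodic: "periodic4 (ydf a xa)"
  unfolding periodic4_def using yd_per[OF X] by auto

end



context
  fixes a xa :: real
  assumes X: "XA a xa"
begin

lemma uniq:
  assumes sol: "is_solution a z" and per: "periodic4 z" and sl: "is_sliding z" and low: "in_closed_lower z"
  shows "\<forall>x\<ge>0. z x = ydf a xa x"
proof -
  have cont: "continuous_on {0..} z" using sol[unfolded is_solution_def] by (rule conjunct1)
  have tc0: "\<forall>c d. 0 \<le> c \<and> c < d \<and> (\<forall>x\<in>{c<..<d}. z x = 0) \<longrightarrow> {c<..<d} \<subseteq> sliding_set"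
    using sol[unfolded is_solution_def] by (rule conjunct2[THEN conjunct2])
  have tc: "\<And>c d. 0 \<le> c \<Longrightarrow> c < d \<Longrightarrow> (\<forall>x\<in>{c<..<d}. z x = 0) \<Longrightarrow> {c<..<d} \<subseteq> sliding_set"
    using tc0 by simp
  have zle: "\<And>x. 0 \<le> x \<Longrightarrow> z x \<le> 0" using low unfolding in_closed_lower_def by simp
  have contI: "\<And>u v. 0 \<le> u \<Longrightarrow> continuous_on {u..v} z"
    using continuous_on_subset[OF cont] by auto
  have a0: "a > 0" using X_a[OF X] .
  have negI: "\<forall>t\<in>{r<..<q}. z t < 0" if "0 \<le> r" "\<forall>t\<in>{r<..<q}. z t \<noteq> 0" for r q
  proof
    fix t assume t: "t \<in> {r<..<q}"
    have "z t \<le> 0" using zle[of t] t that(1) by simp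
    moreover have "z t \<noteq> 0" using that(2) t by blast
    ultimately show "z t < 0" by simp
  qed
  have z4: "z 4 = z 0" using per unfolding periodic4_def by (metis add_0 order_refl)
  have U1: "z 0 = 0"
  proof (rule ccontr)
    assume nz: "z 0 \<noteq> 0"
    hence z4n: "z 4 < 0" using z4 zle[of 0] by simp
    obtain c d where cd: "0 \<le> c" "c < d" "\<forall>x\<in>{c<..<d}. z x = 0"
      using sl unfolding is_sliding_def by blast
    define x0 where "x0 = (c + d) / 2"
    have x0: "z x0 = 0" "x0 \<ge> 0" using cd by (auto simp: x0_def)
    define x1 where "x1 = x0 - 4 * of_int \<lfloor>x0/4\<rfloor>"
    have x1: "z x1 = 0" "0 \<le> x1" "x1 < 4"
      using periodic_reduce[OF per x0(2)] x0 unfolding x1_def by auto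
    obtain r where r: "r \<in> {x1..4}" "z r = 0" "\<forall>t\<in>{r<..4}. z t \<noteq> 0"
      using last_zero[OF contI[OF x1(2), of 4] _ x1(1)] x1 by auto
    have r4: "r < 4" using r z4n by (cases "r = 4") auto
    have "\<forall>t\<in>{r<..<4}. z t < 0" using negI[of r 4] r x1 by auto
    hence "z 4 = - exp (-a*4) * (Phi a 4 - Phi a r)"
      using arc[OF sol _ r4 r(2)] r x1 by auto
    moreover have "Phi a r > Phi a 4" using Phi_gt_4[OF a0, of r] r x1 r4 by auto
    ultimately have "z 4 > 0" by (simp add: mult_pos_neg)
    thus False using z4n by simp
  qed
  have U2: "z t1 \<noteq> 0" if t1: "0 < t1" "t1 < 2/3" for t1
  proof
    assume zt1: "z t1 = 0"
    have "\<exists>s\<in>{0<..<t1}. z s \<noteq> 0"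
    proof (rule ccontr)
      assume "\<not> (\<exists>s\<in>{0<..<t1}. z s \<noteq> 0)"
      hence "\<forall>x\<in>{0<..<t1}. z x = 0" by blast
      hence "{0<..<t1} \<subseteq> sliding_set" using tc[of 0 t1] t1 by simp
      moreover have "t1/2 \<in> {0<..<t1}" using t1 by simp
      ultimately have "t1/2 \<in> sliding_set" by (rule subsetD)
      hence "t1/2 > 2/3" by (rule sliding_le)
      thus False using t1 by simp
    qed
    then obtain s where s: "s \<in> {0<..<t1}" "z s \<noteq> 0" by blast
    obtain r where r: "r \<in> {0..s}" "z r = 0" "\<forall>t\<in>{r<..s}. z t \<noteq> 0"
      using last_zero[OF contI[of 0 s] _ U1] s by auto
    obtain q where q: "q \<in> {s..t1}" "z q = 0" "\<forall>t\<in>{s..<q}. z t \<noteq> 0"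
      using first_zero[OF contI[of s t1] _ zt1] s by auto
    have rs: "r < s" using r s by (cases "r = s") auto
    have sq: "s < q" using q s by (cases "q = s") auto
    have "\<forall>t\<in>{r<..<q}. z t \<noteq> 0"
    proof
      fix t assume t: "t \<in> {r<..<q}"
      show "z t \<noteq> 0"
      proof (cases "t \<le> s")
        case True thus ?thesis using r(3) t by auto
      next
        case False thus ?thesis using q(3) t by auto
      qed
    qed
    moreover have r0: "0 \<le> r" using r by simp
    ultimately have negrq: "\<forall>t\<in>{r<..<q}. z t < 0" using negI by blast
    have rq: "r < q" using rs sq by simp
    have qin: "q \<in> {r..q}" using rq by simp
    have "z q = - exp (-a*q) * (Phi a q - Phi a r)"
      by (rule bspec[OF arc[OF sol r0 rq r(2) negrq] qin])
    hence "Phi a q = Phi a r" using q(2) by simp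
    moreover have "Phi a r < Phi a q" using Phi_inc[of r q a] r rs sq q t1 by auto
    ultimately show False by simp
  qed
  have U3: "\<forall>t\<in>{0..xa}. z t = - exp (-a*t) * (Phi a t - Phi a 0)" "z xa = 0"
  proof -
    have z4': "z 4 = 0" using z4 U1 by simp
    obtain q where q: "q \<in> {1/3..4}" "z q = 0" "\<forall>t\<in>{1/3..<q}. z t \<noteq> 0"
      using first_zero[OF contI[of "1/3" 4] _ z4'] by auto
    have q13: "q > 1/3" using q U2[of "1/3"] by (cases "q = 1/3") auto
    have "\<forall>t\<in>{0<..<q}. z t \<noteq> 0"
    proof
      fix t assume t: "t \<in> {0<..<q}"
      show "z t \<noteq> 0"
      proof (cases "t < 1/3")
        case True thus ?thesis using U2[of t] t by auto
      next
        case False thus ?thesis using q(3) t by auto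
      qed
    qed
    hence neg: "\<forall>t\<in>{0<..<q}. z t < 0" using negI by auto
    have q0: "0 < q" using q13 by simp
    have form: "\<forall>t\<in>{0..q}. z t = - exp (-a*t) * (Phi a t - Phi a 0)"
      using arc[OF sol order_refl q0 U1 neg] .
    hence "Phi a q = Phi a 0" using q(2) q13 by auto
    hence "\<not> q < xa" using X_gt[OF X, of q] q13 by auto
    thus "\<forall>t\<in>{0..xa}. z t = - exp (-a*t) * (Phi a t - Phi a 0)" using form by auto
    thus "z xa = 0" using X_eq[OF X] X_2[OF X] by auto
  qed
  have U4: "z s = 0" if s: "xa < s" "s \<le> 4" for s
  proof (rule ccontr)
    assume nz: "z s \<noteq> 0"
    have xa0: "0 \<le> xa" using X_2[OF X] by simp
    obtain r where r: "r \<in> {xa..s}" "z r = 0" "\<forall>t\<in>{r<..s}. z t \<noteq> 0"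
      using last_zero[OF contI[OF xa0, of s] _ U3(2)] s by auto
    have rs: "r < s" using r nz by (cases "r = s") auto
    have r0: "0 \<le> r" using r xa0 by simp
    have "\<forall>t\<in>{r<..<s}. z t \<noteq> 0" using r(3) by simp
    hence negrs: "\<forall>t\<in>{r<..<s}. z t < 0" using negI r0 by blast
    have sin': "s \<in> {r..s}" using rs by simp
    have "z s = - exp (- a * s) * (Phi a s - Phi a r)"
      by (rule bspec[OF arc[OF sol r0 rs r(2) negrs] sin'])
    moreover have "Phi a s < Phi a r" using Phi_dec[of r s a] r rs s X_2[OF X] by auto
    ultimately have "z s > 0" by (simp add: mult_pos_neg)
    thus False using zle[of s] s X_2[OF X] by simp
  qed
  have onseg: "z t = hf a xa t" if t: "0 \<le> t" "t < 4" for t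
  proof (cases "t \<le> xa")
    case True thus ?thesis using U3(1) t by (simp add: hf_def)
  next
    case False thus ?thesis using U4[of t] t by (simp add: hf_def)
  qed
  show ?thesis
  proof (intro allI impI)
    fix x :: real assume x: "0 \<le> x"
    have "z x = z (x - 4 * of_int \<lfloor>x/4\<rfloor>)" using periodic_reduce[OF per x] by simp
    also have "\<dots> = hf a xa (x - 4 * of_int \<lfloor>x/4\<rfloor>)"
      using onseg red_bounds by simp
    also have "\<dots> = ydf a xa x" by (simp add: ydf_def)
    finally show "z x = ydf a xa x" .
  qed
qed

end

theorem theorem4:
  fixes a :: real
  assumes "a > 0"
  shows "\<exists>xa. 2 < xa \<and> xa < 4 \<and>
    (\<exists>yd. is_solution a yd \<and> periodic4 yd \<and> is_sliding yd \<and> in_closed_lower yd \<and>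
       (\<forall>n::nat. \<forall>x. 4 * real n < x \<and> x < 4 * real n + xa \<longrightarrow> yd x < 0) \<and>
       yd 0 = 0 \<and>
       (\<forall>n::nat. \<forall>x. 4 * real n + xa \<le> x \<and> x \<le> 4 * (real n + 1) \<longrightarrow> yd x = 0) \<and>
       (\<forall>z. is_solution a z \<and> periodic4 z \<and> is_sliding z \<and> in_closed_lower z
              \<longrightarrow> (\<forall>x\<ge>0. z x = yd x)))"
proof -
  obtain xa where X: "XA a xa"
    using xa_exists[OF assms] assms unfolding XA_def by blast
  show ?thesis
  proof (rule exI[of _ xa], intro conjI)
    show "2 < xa" "xa < 4" using X_2[OF X] X_4[OF X] by auto
    show "\<exists>yd. is_solution a yd \<and> periodic4 yd \<and> is_sliding yd \<and> in_closed_lower yd \<and>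
       (\<forall>n::nat. \<forall>x. 4 * real n < x \<and> x < 4 * real n + xa \<longrightarrow> yd x < 0) \<and>
       yd 0 = 0 \<and>
       (\<forall>n::nat. \<forall>x. 4 * real n + xa \<le> x \<and> x \<le> 4 * (real n + 1) \<longrightarrow> yd x = 0) \<and>
       (\<forall>z. is_solution a z \<and> periodic4 z \<and> is_sliding z \<and> in_closed_lower z
              \<longrightarrow> (\<forall>x\<ge>0. z x = yd x))"
    proof (rule exI[of _ "ydf a xa"], intro conjI)
      show "is_solution a (ydf a xa)" by (rule yd_solution[OF X])
      show "periodic4 (ydf a xa)" by (rule yd_periodic[OF X])
      show "is_sliding (ydf a xa)" by (rule yd_sliding[OF X])
      show "in_closed_lower (ydf a xa)" unfolding in_closed_lower_def using yd_le[OF X] by auto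
      show "\<forall>n::nat. \<forall>x. 4 * real n < x \<and> x < 4 * real n + xa \<longrightarrow> ydf a xa x < 0"
        using yd_nat_neg[OF X] by auto
      show "ydf a xa 0 = 0" by (rule yd0[OF X])
      show "\<forall>n::nat. \<forall>x. 4 * real n + xa \<le> x \<and> x \<le> 4 * (real n + 1) \<longrightarrow> ydf a xa x = 0"
        using yd_nat_zero[OF X] by auto
      show "\<forall>z. is_solution a z \<and> periodic4 z \<and> is_sliding z \<and> in_closed_lower z
              \<longrightarrow> (\<forall>x\<ge>0. z x = ydf a xa x)"
        using uniq[OF X] by blast
    qed
  qed
qed


end
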